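(* Let $\mathcal{F}=\{f_i\}_{i=1}^k$ be a frame for $\mathcal{H}_n$ and let $\mathcal{S}=\{I\subseteq\{1,\dots,k\}:\operatorname{span}(\{f_i\}_{i\in I})=\mathcal{H}_n\}$. Then $\operatorname{rob}(\mathcal{F})\le\lfloor\log_2|\mathcal{S}|\rfloor$.
   Context: $\mathcal{H}_n$ is an $n$-dimensional real or complex Hilbert space. A finite sequence of vectors in $\mathcal{H}_n$ is a frame for $\mathcal{H}_n$ iff it spans $\mathcal{H}_n$. A frame $\{f_i\}_{i=1}^k$ is robust to $r$ erasures if for every index set $I\subseteq\{1,\dots,k\}$ with $|I|=r$, the sequence $\{f_i\}_{i\notin I}$ still spans $\mathcal{H}_n$. The maximum robustness $\operatorname{rob}(\mathcal{F})$ is the largest $r$ such that $\mathcal{F}$ is robust to $r$ erasures. *)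

theory Defs
  imports "HOL-Analysis.Analysis"
begin

text \<open>H_n is modelled as the coordinate space K^n = K^'n (K = real or complex),
  with the K-linear span vec.span. A finite sequence f_1,...,f_k is a function
  f :: nat => K^'n restricted to the indices {1..k}.\<close>

definition is_frame :: "(nat \<Rightarrow> 'a::field ^ 'n) \<Rightarrow> nat \<Rightarrow> bool" where
  "is_frame f k \<longleftrightarrow> vec.span (f ` {1..k}) = UNIV"

definition robust_to :: "(nat \<Rightarrow> 'a::field ^ 'n) \<Rightarrow> nat \<Rightarrow> nat \<Rightarrow> bool" where
  "robust_to f k r \<longleftrightarrow>
     (\<forall>I. I \<subseteq> {1..k} \<and> card I = r \<longrightarrow> vec.span (f ` ({1..k} - I)) = UNIV)"

definition rob :: "(nat \<Rightarrow> 'a::field ^ 'n) \<Rightarrow> nat \<Rightarrow> nat" where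
  "rob f k = (GREATEST r. r \<le> k \<and> robust_to f k r)"

definition spanning_index_sets :: "(nat \<Rightarrow> 'a::field ^ 'n) \<Rightarrow> nat \<Rightarrow> nat set set" where
  "spanning_index_sets f k = {I. I \<subseteq> {1..k} \<and> vec.span (f ` I) = UNIV}"

end

theory Submission
  imports Defs
begin

lemma main_gen:
  fixes f :: "nat \<Rightarrow> 'a::field ^ 'n"
  assumes fr: "is_frame f k"
  shows "int (rob f k) \<le> \<lfloor>log 2 (real (card (spanning_index_sets f k)))\<rfloor>"
proof -
  let ?r = "rob f k"
  have r0: "robust_to f k 0"
    using fr unfolding robust_to_def is_frame_def
    by (metis Diff_empty card_0_eq finite_atLeastAtMost finite_subset)
  have "?r \<le> k \<and> robust_to f k ?r"
    unfolding rob_def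
    by (rule GreatestI_nat[where k=0 and b=k]) (use r0 in auto)
  hence rk: "?r \<le> k" and rob: "robust_to f k ?r" by auto
  obtain J where J: "J \<subseteq> {1..k}" "card J = ?r"
    using rk by (metis card_atLeastAtMost diff_Suc_1 obtain_subset_with_card_n)
  define S where "S = spanning_index_sets f k"
  have finS: "finite S" unfolding S_def spanning_index_sets_def
    by (rule finite_subset[of _ "Pow {1..k}"]) auto
  have spJ: "vec.span (f ` ({1..k} - J)) = UNIV" using rob J unfolding robust_to_def by auto
  have sub: "(\<lambda>I. {1..k} - I) ` Pow J \<subseteq> S"
  proof
    fix X assume "X \<in> (\<lambda>I. {1..k} - I) ` Pow J"
    then obtain I where I: "I \<subseteq> J" "X = {1..k} - I" by auto
    have "vec.span (f ` ({1..k} - J)) \<subseteq> vec.span (f ` X)"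
      using I by (intro vec.span_mono) auto
    thus "X \<in> S" using spJ I unfolding S_def spanning_index_sets_def by auto
  qed
  have inj: "inj_on (\<lambda>I. {1..k} - I) (Pow J)"
    using J(1) by (intro inj_onI) blast
  have "card (Pow J) \<le> card S"
    using card_inj_on_le[OF inj sub finS] .
  moreover have "finite J" using J(1) finite_subset by blast
  ultimately have c: "2 ^ ?r \<le> card S" using J(2) card_Pow by metis
  hence "real (2 ^ ?r) \<le> real (card S)" by linarith
  hence "log 2 (2 ^ ?r) \<le> log 2 (real (card S))"
    using c by (subst log_le_cancel_iff) (auto intro: order.strict_trans2[of 0 "2 ^ rob f k"])
  hence "real ?r \<le> log 2 (real (card S))" by simp
  thus ?thesis unfolding S_def by (simp add: le_floor_iff)
qed

theorem proposition2p1: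
  shows "(\<forall>(f :: nat \<Rightarrow> real ^ 'n) k. is_frame f k \<longrightarrow>
            int (rob f k) \<le> \<lfloor>log 2 (real (card (spanning_index_sets f k)))\<rfloor>)
       \<and> (\<forall>(f :: nat \<Rightarrow> complex ^ 'n) k. is_frame f k \<longrightarrow>
            int (rob f k) \<le> \<lfloor>log 2 (real (card (spanning_index_sets f k)))\<rfloor>)"
  by (intro conjI allI impI main_gen)

end
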